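(* Let $\Omega$ be a finite set, let $\mathcal C$ be the set of all functions from the power set of $\Omega$ to $\mathbb R$ (credence functions), and let $\mathcal P\subseteq\mathcal C$ be the set of probability functions on $\Omega$. Let $M$ be a finite real number and let $s:\mathcal P\to[-\infty,M]^\Omega$ be a proper scoring rule on $\mathcal P$. Then the following conditions are equivalent: (a) for every extension of $s$ to a quasi-strictly proper scoring rule $s':\mathcal C\to[-\infty,M]^\Omega$ (so $s'(p)=s(p)$ for $p\in\mathcal P$), if $c\in\mathcal C\setminus\mathcal P$, then there is a $p\in\mathcal P$ such that $s'(p)=s(p)$ strictly dominates $s'(c)$; (b) either $E_p s(p)$ is infinite for some $p\in\mathcal P$, or both of the following hold: (i) for any sequence $(p_n)$ in $\mathcal P$ converging to some $p\in\mathcal P$ such that $s(p_n)$ is finite for all $n$ while $s(p)$ is not finite, we have $\lim_n E_{p_n}s(p_n)=E_p s(p)$; (ii) if $F=s[\mathcal P]\cap\mathbb R^\Omega$ is the set of finite scores, then $F$ is dense in $\partial^+\operatorname{Conv}F$.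
   Context: An (accuracy) scoring rule is a function $s$ from a set $\mathcal F$ with $\mathcal P\subseteq\mathcal F\subseteq\mathcal C$ to $[-\infty,M]^\Omega$ for some finite $M$, where $A^B$ denotes the set of functions $B\to A$. For $p\in\mathcal P$ and $f:\Omega\to[-\infty,\infty]$, $E_p f=\sum_{\omega\in\Omega,\,p(\{\omega\})\neq0}p(\{\omega\})f(\omega)$. The rule $s$ is proper on $\mathcal F$ if $E_p s(p)\ge E_p s(c)$ for all $p\in\mathcal P$, $c\in\mathcal F$; strictly proper if the inequality is strict whenever $c\ne p$; quasi-strictly proper if it is proper and the inequality is strict whenever $p\in\mathcal P$ and $c\in\mathcal F\setminus\mathcal P$. A score $z\in[-\infty,M]^\Omega$ is finite if $|z(\omega)|<\infty$ for all $\omega$. A score $s(c_2)$ strictly dominates $s(c_1)$ if $s(c_2)(\omega)>s(c_1)(\omega)$ for all $\omega\in\Omega$. $\mathcal P$ carries the topology in which $p_n\to p$ iff $p_n(\{\omega\})\to p(\{\omega\})$ for all $\omega$. On $\mathbb R^\Omega$, $\langle f,g\rangle=\sum_\omega f(\omega)g(\omega)$. A boundary point $z$ of a set $G\subseteq\mathbb R^\Omega$ is positive-facing if there is $v\in(0,\infty)^\Omega$ with $\langle v,w\rangle\le\langle v,z\rangle$ for all $w\in G$; $\partial^+G$ is the set of positive-facing boundary points. $\operatorname{Conv}F$ is the convex hull of $F$. Density of $F$ in $B$ means every open set of $\mathbb R^\Omega$ meeting $B$ meets $F$. *)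

theory Defs
  imports "HOL-Analysis.Analysis" "HOL-Library.Extended_Real"
begin

text \<open>Omega is a finite type 'w. Credence functions: 'w set \<Rightarrow> real (all of C).
  Scores: 'w \<Rightarrow> ereal. Finite scores are identified with vectors in real^'w.\<close>

definition prob_fun :: "('w set \<Rightarrow> real) \<Rightarrow> bool" where
  "prob_fun p \<longleftrightarrow> (\<forall>A. 0 \<le> p A) \<and> p UNIV = 1 \<and>
     (\<forall>A B. A \<inter> B = {} \<longrightarrow> p (A \<union> B) = p A + p B)"

definition Probs :: "('w set \<Rightarrow> real) set" where
  "Probs = {p. prob_fun p}"

definition Exp :: "('w::finite set \<Rightarrow> real) \<Rightarrow> ('w \<Rightarrow> ereal) \<Rightarrow> ereal" where
  "Exp p f = (\<Sum>\<omega>\<in>{\<omega>. p {\<omega>} \<noteq> 0}. ereal (p {\<omega>}) * f \<omega>)"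

definition proper_on :: "('w::finite set \<Rightarrow> real) set \<Rightarrow> (('w set \<Rightarrow> real) \<Rightarrow> 'w \<Rightarrow> ereal) \<Rightarrow> bool" where
  "proper_on F s \<longleftrightarrow> (\<forall>p\<in>Probs. \<forall>c\<in>F. Exp p (s c) \<le> Exp p (s p))"

definition quasi_strictly_proper_on :: "('w::finite set \<Rightarrow> real) set \<Rightarrow> (('w set \<Rightarrow> real) \<Rightarrow> 'w \<Rightarrow> ereal) \<Rightarrow> bool" where
  "quasi_strictly_proper_on F s \<longleftrightarrow> proper_on F s \<and>
     (\<forall>p\<in>Probs. \<forall>c\<in>F - Probs. Exp p (s c) < Exp p (s p))"

definition finite_score :: "('w \<Rightarrow> ereal) \<Rightarrow> bool" where
  "finite_score z \<longleftrightarrow> (\<forall>\<omega>. \<bar>z \<omega>\<bar> < \<infinity>)"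

definition strictly_dominates :: "('w \<Rightarrow> ereal) \<Rightarrow> ('w \<Rightarrow> ereal) \<Rightarrow> bool" where
  "strictly_dominates z2 z1 \<longleftrightarrow> (\<forall>\<omega>. z1 \<omega> < z2 \<omega>)"

definition pos_facing_boundary :: "(real^'w::finite) set \<Rightarrow> (real^'w) set" where
  "pos_facing_boundary G = {z \<in> frontier G. \<exists>v. (\<forall>\<omega>. 0 < v $ \<omega>) \<and> (\<forall>w\<in>G. inner v w \<le> inner v z)}"

definition dense_in_set :: "(real^'w::finite) set \<Rightarrow> (real^'w) set \<Rightarrow> bool" where
  "dense_in_set F B \<longleftrightarrow> (\<forall>U. open U \<longrightarrow> U \<inter> B \<noteq> {} \<longrightarrow> U \<inter> F \<noteq> {})"

definition finite_scores :: "(('w::finite set \<Rightarrow> real) \<Rightarrow> 'w \<Rightarrow> ereal) \<Rightarrow> (real^'w) set" where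
  "finite_scores s = {z. \<exists>p\<in>Probs. \<forall>\<omega>. s p \<omega> = ereal (z $ \<omega>)}"

end

theory Submission
  imports Defs
begin

definition pv :: "('w::finite set \<Rightarrow> real) \<Rightarrow> real^'w" where
  "pv p = (\<chi> \<omega>. p {\<omega>})"
definition pf :: "real^'w::finite \<Rightarrow> ('w set \<Rightarrow> real)" where
  "pf q = (\<lambda>A. \<Sum>\<omega>\<in>A. q$\<omega>)"
definition Delta :: "(real^'w::finite) set" where
  "Delta = {q. (\<forall>\<omega>. 0 \<le> q$\<omega>) \<and> sum (\<lambda>\<omega>. q$\<omega>) UNIV = 1}"

lemma prob_empty: "p \<in> Probs \<Longrightarrow> p {} = 0"
proof -
  assume "p \<in> Probs"
  then have "\<forall>A B. A \<inter> B = {} \<longrightarrow> p (A \<union> B) = p A + p B" unfolding Probs_def prob_fun_def by blast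
  then have "p ({} \<union> {}) = p {} + p {}" by blast
  then show ?thesis by simp
qed

lemma prob_sum: fixes p :: "'w::finite set \<Rightarrow> real" assumes "p \<in> Probs" shows "p A = (\<Sum>\<omega>\<in>A. p {\<omega>})"
proof -
  have "finite A" by simp
  then show ?thesis
  proof (induction A rule: finite_induct)
    case empty then show ?case using prob_empty[OF assms] by simp
  next
    case (insert x F)
    have "p (insert x F) = p ({x} \<union> F)" by simp
    also have "\<dots> = p {x} + p F"
    proof -
      have "\<forall>A B. A \<inter> B = {} \<longrightarrow> p (A \<union> B) = p A + p B" using assms unfolding Probs_def prob_fun_def by auto
      moreover have "{x} \<inter> F = {}" using insert(2) by auto
      ultimately show ?thesis by blast
    qed
    finally show ?case using insert by simp
  qed
qed

lemma prob_nonneg: "p \<in> Probs \<Longrightarrow> 0 \<le> p A"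
  unfolding Probs_def prob_fun_def by auto

lemma prob_total: "(p::'w::finite set \<Rightarrow> real) \<in> Probs \<Longrightarrow> (\<Sum>\<omega>\<in>UNIV. p {\<omega>}) = 1"
proof -
  assume a: "p \<in> Probs"
  then have "p UNIV = 1" by (simp add: Probs_def prob_fun_def)
  then show ?thesis using prob_sum[OF a, of UNIV] by simp
qed

lemma pv_nth[simp]: "pv p $ \<omega> = p {\<omega>}" by (simp add: pv_def)

lemma pv_Delta: "p \<in> Probs \<Longrightarrow> pv p \<in> Delta"
  using prob_total prob_nonneg by (auto simp: Delta_def)

lemma pf_single[simp]: "pf q {\<omega>} = q $ \<omega>" by (simp add: pf_def)

lemma pf_Probs: assumes "q \<in> Delta" shows "pf q \<in> Probs"
proof -
  have nn: "\<forall>\<omega>. 0 \<le> q$\<omega>" and s1: "sum (\<lambda>\<omega>. q$\<omega>) UNIV = 1" using assms unfolding Delta_def by auto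
  have "0 \<le> pf q A" for A unfolding pf_def using nn by (simp add: sum_nonneg)
  moreover have "pf q UNIV = 1" unfolding pf_def using s1 by simp
  moreover have "pf q (A \<union> B) = pf q A + pf q B" if "A \<inter> B = {}" for A B
    unfolding pf_def by (rule sum.union_disjoint) (use that in auto)
  ultimately show ?thesis unfolding Probs_def prob_fun_def by blast
qed

lemma pv_pf[simp]: "pv (pf q) = q" by (simp add: pv_def vec_eq_iff)

lemma zero_not_Probs: "(\<lambda>A. 0) \<notin> Probs"
  unfolding Probs_def prob_fun_def by auto

lemma Exp_all: "Exp p f = (\<Sum>\<omega>\<in>UNIV. ereal (p {\<omega>}) * f \<omega>)"
  unfolding Exp_def by (rule sum.mono_neutral_left) (simp_all add: zero_ereal_def[symmetric])

lemma inner_pv: "pv p \<bullet> x = (\<Sum>\<omega>\<in>UNIV. p {\<omega>} * x $ \<omega>)"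
  by (simp add: inner_vec_def)

lemma Exp_real: "Exp p (\<lambda>\<omega>. ereal (x $ \<omega>)) = ereal (pv p \<bullet> x)"
  unfolding Exp_all inner_pv by (simp add: sum_ereal)

lemma Exp_mono: assumes "p \<in> Probs" "\<And>\<omega>. f \<omega> \<le> g \<omega>" shows "Exp p f \<le> Exp p g"
  unfolding Exp_all
  by (rule sum_mono, rule ereal_mult_left_mono) (use assms prob_nonneg in auto)

lemma Exp_le_M: assumes "p \<in> Probs" "\<And>\<omega>. f \<omega> \<le> ereal M" shows "Exp p f \<le> ereal M"
proof -
  have "Exp p f \<le> Exp p (\<lambda>\<omega>. ereal ((\<chi> i. M) $ \<omega>))"
    by (rule Exp_mono[OF assms(1)]) (simp add: assms(2))
  also have "\<dots> = ereal M"
  proof -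
    have "(\<Sum>\<omega>\<in>UNIV. p {\<omega>} * M) = (\<Sum>\<omega>\<in>UNIV. p {\<omega>}) * M" by (rule sum_distrib_right[symmetric])
    then show ?thesis unfolding Exp_real inner_pv using prob_total[OF assms(1)] by simp
  qed
  finally show ?thesis .
qed

lemma Exp_neq_inf: assumes "p \<in> Probs" "\<And>\<omega>. f \<omega> \<le> ereal M" shows "Exp p f \<noteq> \<infinity>"
proof -
  have "Exp p f \<le> ereal M" by (rule Exp_le_M[OF assms(1)]) (rule assms(2))
  then show ?thesis by auto
qed

lemma ereal_mult_shift: assumes "0 \<le> a" "x \<noteq> \<infinity>"
  shows "ereal a * (x + ereal c) = ereal a * x + ereal (a * c)"
  using assms by (cases x; cases "a = 0") (auto simp: algebra_simps)

lemma Exp_shift: assumes p: "p \<in> Probs" and f: "\<And>\<omega>. f \<omega> \<noteq> \<infinity>"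
  shows "Exp p (\<lambda>\<omega>. f \<omega> + ereal c) = Exp p f + ereal c"
proof -
  have "Exp p (\<lambda>\<omega>. f \<omega> + ereal c) = (\<Sum>\<omega>\<in>UNIV. ereal (p {\<omega>}) * f \<omega> + ereal (p {\<omega>} * c))"
    unfolding Exp_all by (rule sum.cong) (auto intro!: ereal_mult_shift prob_nonneg[OF p] f)
  also have "\<dots> = Exp p f + (\<Sum>\<omega>\<in>UNIV. ereal (p {\<omega>} * c))"
    unfolding Exp_all by (rule sum.distrib)
  also have "(\<Sum>\<omega>\<in>UNIV. ereal (p {\<omega>} * c)) = ereal c"
  proof -
    have "(\<Sum>\<omega>\<in>UNIV. p {\<omega>} * c) = (\<Sum>\<omega>\<in>UNIV. p {\<omega>}) * c" by (rule sum_distrib_right[symmetric])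
    then show ?thesis using prob_total[OF p] by (simp add: sum_ereal)
  qed
  finally show ?thesis .
qed

lemma Exp_minf: assumes p: "p \<in> Probs" and f: "\<And>\<omega>. f \<omega> \<le> ereal M"
  and pos: "p {\<omega>} > 0" and inf: "f \<omega> = -\<infinity>"
  shows "Exp p f = -\<infinity>"
proof -
  have "Exp p f = ereal (p {\<omega>}) * f \<omega> + (\<Sum>i\<in>UNIV - {\<omega>}. ereal (p {i}) * f i)"
    unfolding Exp_all by (rule sum.remove) auto
  moreover have "(\<Sum>i\<in>UNIV - {\<omega>}. ereal (p {i}) * f i) \<noteq> \<infinity>"
  proof -
    have "(\<Sum>i\<in>UNIV - {\<omega>}. ereal (p {i}) * f i) \<le> (\<Sum>i\<in>UNIV - {\<omega>}. ereal (p {i}) * ereal M)"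
      by (rule sum_mono, rule ereal_mult_left_mono) (use f prob_nonneg[OF p] in auto)
    also have "\<dots> = ereal (\<Sum>i\<in>UNIV - {\<omega>}. p {i} * M)" by (simp add: sum_ereal)
    finally show ?thesis by auto
  qed
  ultimately show ?thesis using pos inf by simp
qed

definition unif :: "real^'w::finite" where "unif = (\<chi> \<omega>. 1 / real CARD('w))"

lemma unif_Delta: "unif \<in> Delta"
  by (simp add: unif_def Delta_def)

lemma unif_pos: "pf unif {\<omega>} > 0"
  by (simp add: unif_def)

lemma closed_comp_le: "closed {x::real^'w::finite. x $ i \<le> a}"
  by (rule closed_halfspace_component_le_cart)

lemma convex_comp_le: "convex {x::real^'w::finite. x $ i \<le> a}"
  unfolding convex_def
proof (intro ballI allI impI)
  fix x y :: "real^'w" and u v :: real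
  assume "x \<in> {x. x $ i \<le> a}" "y \<in> {x. x $ i \<le> a}" "0 \<le> u" "0 \<le> v" "u + v = 1"
  then have "u * x$i + v * y$i \<le> u * a + v * a" by (intro add_mono mult_left_mono) auto
  moreover have "u * a + v * a = a" using \<open>u + v = 1\<close> by (metis distrib_right mult_1)
  ultimately show "u *\<^sub>R x + v *\<^sub>R y \<in> {x. x $ i \<le> a}" by simp
qed


lemma inner_ones: "a \<bullet> (\<chi> i. c) = c * (\<Sum>i\<in>UNIV. a $ i)"
  by (simp add: inner_vec_def sum_distrib_left mult.commute)

lemma minimax:
  fixes F :: "(real^'w::finite) set" and z :: "real^'w"
  assumes H: "\<forall>q\<in>Delta. \<exists>u\<in>F. q \<bullet> u > q \<bullet> z"
  shows "\<exists>x \<in> convex hull F. \<forall>\<omega>. z$\<omega> < x$\<omega>"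
proof (rule ccontr)
  assume nx: "\<not> ?thesis"
  define A where "A = (\<lambda>x. x - z) ` (convex hull F)"
  define B where "B = {y::real^'w. \<forall>\<omega>. 0 < y$\<omega>}"
  have cA: "convex A" unfolding A_def by (rule convex_translation_subtract) (rule convex_convex_hull)
  have cB: "convex B" unfolding B_def convex_def
  proof (intro ballI allI impI)
    fix x y :: "real^'w" and u v :: real
    assume xy: "x \<in> {y. \<forall>\<omega>. 0 < y $ \<omega>}" "y \<in> {y. \<forall>\<omega>. 0 < y $ \<omega>}" and uv: "0 \<le> u" "0 \<le> v" "u + v = 1"
    show "u *\<^sub>R x + v *\<^sub>R y \<in> {y. \<forall>\<omega>. 0 < y $ \<omega>}"
    proof (clarsimp)
      fix \<omega>
      show "0 < u * x $ \<omega> + v * y $ \<omega>"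
      proof (cases "u = 0")
        case True then show ?thesis using uv xy by simp
      next
        case False then have "u > 0" using uv by simp
        then have "0 < u * x $ \<omega>" using xy by simp
        moreover have "0 \<le> v * y $ \<omega>" using uv xy by (simp add: less_imp_le)
        ultimately show ?thesis by simp
      qed
    qed
  qed
  have Dne: "unif \<in> (Delta :: (real^'w) set)" by (rule unif_Delta)
  then obtain u0 where u0: "u0 \<in> F" using H by blast
  have Ane: "A \<noteq> {}" unfolding A_def using hull_inc[OF u0] by blast
  have "(\<chi> i. 1) \<in> B" unfolding B_def by simp
  then have Bne: "B \<noteq> {}" by blast
  have disj: "A \<inter> B = {}"
  proof (rule ccontr)
    assume "A \<inter> B \<noteq> {}"
    then obtain x where "x \<in> convex hull F" "\<forall>\<omega>. 0 < (x - z)$\<omega>" unfolding A_def B_def by blast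
    then show False using nx by auto
  qed
  obtain a b where ab: "a \<noteq> 0" "\<forall>x\<in>A. a \<bullet> x \<le> b" "\<forall>x\<in>B. b \<le> a \<bullet> x"
    using separating_hyperplane_sets[OF cA cB Ane Bne disj] by blast
  have anneg: "0 \<le> a$\<omega>" for \<omega>
  proof (rule ccontr)
    assume "\<not> 0 \<le> a$\<omega>"
    then have neg: "a$\<omega> < 0" by simp
    define c where "c = (\<bar>a \<bullet> (\<chi> i. 1)\<bar> + \<bar>b\<bar> + 1) / (- a$\<omega>)"
    have c0: "c > 0" unfolding c_def using neg by (intro divide_pos_pos) auto
    define y :: "real^'w" where "y = (\<chi> i. 1) + c *\<^sub>R axis \<omega> 1"
    have "y \<in> B" unfolding B_def y_def using c0 by (auto simp: axis_def)
    then have "b \<le> a \<bullet> y" using ab by blast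
    also have "a \<bullet> y = a \<bullet> (\<chi> i. 1) + c * a$\<omega>" unfolding y_def by (simp add: inner_add_right inner_axis)
    also have "c * a$\<omega> = - (\<bar>a \<bullet> (\<chi> i. 1)\<bar> + \<bar>b\<bar> + 1)" unfolding c_def using neg by simp
    finally show False by argo
  qed
  define Sa where "Sa = (\<Sum>i\<in>UNIV. a$i)"
  have Sa0: "Sa > 0"
  proof -
    obtain i where "a$i \<noteq> 0" using ab(1) by (metis vec_eq_iff zero_index)
    then have "0 < a$i" using anneg[of i] by simp
    also have "a$i \<le> Sa" unfolding Sa_def by (rule member_le_sum) (auto simp: anneg)
    finally show ?thesis .
  qed
  have b0: "b \<le> 0"
  proof (rule ccontr)
    assume "\<not> b \<le> 0"
    then have bp: "b > 0" by simp
    define d where "d = b / (2 * (Sa + 1))"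
    have "(\<chi> i. d) \<in> B" unfolding B_def d_def using bp Sa0 by simp
    then have "b \<le> a \<bullet> (\<chi> i. d)" using ab by blast
    also have "\<dots> = d * Sa" unfolding inner_ones Sa_def ..
    also have "d * Sa < b" unfolding d_def using bp Sa0 by (simp add: field_simps add_pos_pos)
    finally show False by simp
  qed
  define q where "q = (1 / Sa) *\<^sub>R a"
  have qD: "q \<in> Delta" unfolding q_def Delta_def using Sa0 anneg
    by (auto simp: Sa_def sum_divide_distrib[symmetric])
  then obtain u where u: "u \<in> F" "q \<bullet> u > q \<bullet> z" using H by blast
  have "u - z \<in> A" unfolding A_def using hull_inc[OF u(1)] by blast
  then have "a \<bullet> (u - z) \<le> 0" using ab b0 by force
  moreover have "q \<bullet> (u - z) = (1 / Sa) * (a \<bullet> (u - z))" unfolding q_def by simp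
  moreover have "q \<bullet> (u - z) > 0" using u(2) by (simp add: inner_diff_right)
  ultimately show False using Sa0 by (simp add: zero_less_divide_iff)
qed


lemma ln_lower: fixes y :: real assumes "\<bar>y\<bar> \<le> 1/2" shows "y - 2 * y\<^sup>2 \<le> ln (1 + y)"
proof (cases "y \<ge> 0")
  case True
  then have "y - y\<^sup>2 \<le> ln (1 + y)" using assms by (intro ln_one_plus_pos_lower_bound) auto
  moreover have "y - 2 * y\<^sup>2 \<le> y - y\<^sup>2" by simp
  ultimately show ?thesis by argo
next
  case False
  then have "- (-y) - 2 * (-y)\<^sup>2 \<le> ln (1 - (-y))" using assms by (intro ln_one_minus_pos_lower_bound) auto
  then show ?thesis by simp
qed

lemma hull_comp_le: fixes F :: "(real^'w::finite) set"
  assumes "\<forall>x\<in>F. \<forall>\<omega>. x$\<omega> \<le> M" and "x \<in> closure (convex hull F)" shows "x$\<omega> \<le> M"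
proof -
  have "convex hull F \<subseteq> {x. x $ \<omega> \<le> M}"
    by (rule hull_minimal) (use assms(1) convex_comp_le in auto)
  then have "closure (convex hull F) \<subseteq> {x. x $ \<omega> \<le> M}"
    by (rule closure_minimal) (rule closed_comp_le)
  then show ?thesis using assms(2) by auto
qed

lemma logbar:
  fixes F :: "(real^'w::finite) set" and z x0 :: "real^'w" and M :: real
  assumes x0: "x0 \<in> convex hull F" "\<forall>\<omega>. z$\<omega> < x0$\<omega>" and Mb: "\<forall>x\<in>F. \<forall>\<omega>. x$\<omega> \<le> M"
  shows "\<exists>w \<in> pos_facing_boundary (convex hull F). \<forall>\<omega>. z$\<omega> < w$\<omega>"
proof -
  define K where "K = closure (convex hull F)"
  have cK: "convex K" unfolding K_def by (simp add: convex_closure)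
  have clK: "closed K" unfolding K_def by simp
  have KM: "x \<in> K \<Longrightarrow> x$\<omega> \<le> M" for x \<omega> unfolding K_def by (rule hull_comp_le[OF Mb])
  have x0K: "x0 \<in> K" unfolding K_def using x0(1) closure_subset by blast
  define \<phi> where "\<phi> x = (\<Sum>\<omega>\<in>UNIV. ln (x$\<omega> - z$\<omega>))" for x :: "real^'w"
  define c0 where "c0 = \<phi> x0"
  define Lm where "Lm = (\<Sum>\<omega>\<in>UNIV. \<bar>ln (M - z$\<omega>)\<bar>)"
  define \<eta> where "\<eta> = exp (c0 - Lm)"
  have \<eta>0: "\<eta> > 0" unfolding \<eta>_def by simp
  have bound: "\<eta> \<le> x$\<omega> - z$\<omega>" if xK: "x \<in> K" and xz: "\<forall>\<omega>. z$\<omega> < x$\<omega>" and c0x: "c0 \<le> \<phi> x" for x \<omega>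
  proof -
    have lnle: "ln (x$i - z$i) \<le> \<bar>ln (M - z$i)\<bar>" for i
    proof -
      have "ln (x$i - z$i) \<le> ln (M - z$i)" using xz KM[OF xK, of i] by (intro ln_mono) auto
      then show ?thesis by simp
    qed
    have "\<phi> x = ln (x$\<omega> - z$\<omega>) + (\<Sum>i\<in>UNIV-{\<omega>}. ln (x$i - z$i))"
      unfolding \<phi>_def by (rule sum.remove) auto
    moreover have "(\<Sum>i\<in>UNIV-{\<omega>}. ln (x$i - z$i)) \<le> (\<Sum>i\<in>UNIV-{\<omega>}. \<bar>ln (M - z$i)\<bar>)"
      by (rule sum_mono) (rule lnle)
    moreover have "(\<Sum>i\<in>UNIV-{\<omega>}. \<bar>ln (M - z$i)\<bar>) \<le> Lm"
      unfolding Lm_def by (rule sum_mono2) auto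
    ultimately have "c0 - Lm \<le> ln (x$\<omega> - z$\<omega>)" using c0x by argo
    then have "exp (c0 - Lm) \<le> exp (ln (x$\<omega> - z$\<omega>))" by simp
    then show ?thesis unfolding \<eta>_def using xz by simp
  qed
  define K\<eta> where "K\<eta> = K \<inter> cbox (\<chi> i. z$i + \<eta>) (\<chi> i. M)"
  have K\<eta>_eq: "x \<in> K\<eta> \<longleftrightarrow> x \<in> K \<and> (\<forall>\<omega>. z$\<omega> + \<eta> \<le> x$\<omega>)" for x
    using KM by (auto simp: K\<eta>_def mem_box_cart)
  have cpt: "compact K\<eta>" unfolding K\<eta>_def by (rule closed_Int_compact[OF clK compact_cbox])
  have x0K\<eta>: "x0 \<in> K\<eta>"
  proof -
    have "z$\<omega> + \<eta> \<le> x0$\<omega>" for \<omega> using bound[OF x0K x0(2), of \<omega>] unfolding c0_def by simp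
    then show ?thesis unfolding K\<eta>_eq using x0K by auto
  qed
  have cont: "continuous_on K\<eta> \<phi>"
    unfolding \<phi>_def
  proof (intro continuous_on_sum ballI continuous_on_ln continuous_on_diff continuous_on_component continuous_on_id continuous_on_const)
    fix x \<omega> assume "x \<in> K\<eta>"
    then have "z$\<omega> + \<eta> \<le> x$\<omega>" unfolding K\<eta>_eq by auto
    then show "x $ \<omega> - z $ \<omega> \<noteq> 0" using \<eta>0 by simp
  qed
  obtain w where wK\<eta>: "w \<in> K\<eta>" and wmax: "\<forall>y\<in>K\<eta>. \<phi> y \<le> \<phi> w"
    using continuous_attains_sup[OF cpt _ cont] x0K\<eta> by blast
  have wK: "w \<in> K" and wz: "\<And>\<omega>. z$\<omega> + \<eta> \<le> w$\<omega>" using wK\<eta> unfolding K\<eta>_eq by auto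
  have wz': "z$\<omega> < w$\<omega>" for \<omega> using wz[of \<omega>] \<eta>0 by simp
  have gmax: "\<phi> y \<le> \<phi> w" if yK: "y \<in> K" and yz: "\<forall>\<omega>. z$\<omega> < y$\<omega>" for y
  proof (cases "c0 \<le> \<phi> y")
    case True
    have "z$\<omega> + \<eta> \<le> y$\<omega>" for \<omega> using bound[OF yK yz True, of \<omega>] by simp
    then have "y \<in> K\<eta>" unfolding K\<eta>_eq using yK by auto
    then show ?thesis using wmax by blast
  next
    case False
    then show ?thesis using wmax x0K\<eta> unfolding c0_def by force
  qed
  define v where "v = (\<chi> \<omega>. 1 / (w$\<omega> - z$\<omega>))"
  have vpos: "0 < v$\<omega>" for \<omega> unfolding v_def using wz'[of \<omega>] by simp
  have supp: "v \<bullet> x \<le> v \<bullet> w" if xK: "x \<in> K" for x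
  proof (rule ccontr)
    assume "\<not> v \<bullet> x \<le> v \<bullet> w"
    define c where "c \<omega> = v$\<omega> * (x$\<omega> - w$\<omega>)" for \<omega>
    define Sc where "Sc = (\<Sum>\<omega>\<in>UNIV. c \<omega>)"
    have "Sc = v \<bullet> (x - w)" unfolding Sc_def c_def inner_vec_def by simp
    then have Sc0: "Sc > 0" using \<open>\<not> v \<bullet> x \<le> v \<bullet> w\<close> by (simp add: inner_diff_right)
    define B where "B = (\<Sum>\<omega>\<in>UNIV. \<bar>c \<omega>\<bar>) + 1"
    define C where "C = (\<Sum>\<omega>\<in>UNIV. (c \<omega>)\<^sup>2) + 1"
    have B1: "B \<ge> 1" unfolding B_def by (simp add: sum_nonneg)
    have C1: "C \<ge> 1" unfolding C_def by (simp add: sum_nonneg)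
    have cB: "\<bar>c \<omega>\<bar> \<le> B" for \<omega>
    proof -
      have "\<bar>c \<omega>\<bar> \<le> (\<Sum>\<omega>\<in>UNIV. \<bar>c \<omega>\<bar>)" by (rule member_le_sum) auto
      then show ?thesis unfolding B_def by simp
    qed
    define t where "t = min (1 / (2 * B)) (Sc / (4 * C))"
    have t0: "t > 0" unfolding t_def using B1 C1 Sc0 by simp
    have tB: "t \<le> 1 / (2 * B)" and tC: "t \<le> Sc / (4 * C)" unfolding t_def by auto
    have t1: "t \<le> 1"
    proof -
      have "1 / (2 * B) \<le> 1" using B1 by (simp add: field_simps)
      then show ?thesis using tB by simp
    qed
    have tc: "\<bar>t * c \<omega>\<bar> \<le> 1/2" for \<omega>
    proof -
      have "\<bar>t * c \<omega>\<bar> = t * \<bar>c \<omega>\<bar>" using t0 by (simp add: abs_mult)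
      also have "\<dots> \<le> (1 / (2 * B)) * B" using tB cB[of \<omega>] t0 B1
        by (intro mult_mono) auto
      also have "\<dots> = 1/2" using B1 by simp
      finally show ?thesis .
    qed
    define y where "y = (1 - t) *\<^sub>R w + t *\<^sub>R x"
    have yK: "y \<in> K" unfolding y_def using cK wK xK t0 t1 by (intro convexD) auto
    have yc: "y$\<omega> - z$\<omega> = (w$\<omega> - z$\<omega>) * (1 + t * c \<omega>)" for \<omega>
      unfolding y_def c_def v_def using wz'[of \<omega>] by (simp add: field_simps)
    have pos1: "1 + t * c \<omega> > 0" for \<omega> using tc[of \<omega>] by (simp add: abs_le_iff)
    have yz: "\<forall>\<omega>. z$\<omega> < y$\<omega>"
    proof
      fix \<omega> have "0 < (w$\<omega> - z$\<omega>) * (1 + t * c \<omega>)" using wz'[of \<omega>] pos1[of \<omega>] by simp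
      then show "z$\<omega> < y$\<omega>" using yc[of \<omega>] by simp
    qed
    have "\<phi> y = (\<Sum>\<omega>\<in>UNIV. ln (w$\<omega> - z$\<omega>) + ln (1 + t * c \<omega>))"
      unfolding \<phi>_def
    proof (rule sum.cong)
      fix \<omega> :: 'w
      show "ln (y$\<omega> - z$\<omega>) = ln (w$\<omega> - z$\<omega>) + ln (1 + t * c \<omega>)"
        unfolding yc using wz'[of \<omega>] pos1[of \<omega>] by (simp add: ln_mult)
    qed simp
    also have "\<dots> = \<phi> w + (\<Sum>\<omega>\<in>UNIV. ln (1 + t * c \<omega>))" unfolding \<phi>_def by (rule sum.distrib)
    finally have phy: "\<phi> y = \<phi> w + (\<Sum>\<omega>\<in>UNIV. ln (1 + t * c \<omega>))" .
    have "(\<Sum>\<omega>\<in>UNIV. t * c \<omega> - 2 * (t * c \<omega>)\<^sup>2) \<le> (\<Sum>\<omega>\<in>UNIV. ln (1 + t * c \<omega>))"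
      by (rule sum_mono) (rule ln_lower[OF tc])
    moreover have "(\<Sum>\<omega>\<in>UNIV. t * c \<omega> - 2 * (t * c \<omega>)\<^sup>2) = t * Sc - 2 * t\<^sup>2 * (C - 1)"
      unfolding Sc_def C_def by (simp add: sum_subtractf sum_distrib_left power_mult_distrib mult.assoc)
    moreover have "t * Sc - 2 * t\<^sup>2 * (C - 1) > 0"
    proof -
      have "2 * t * C \<le> 2 * (Sc / (4 * C)) * C" using tC C1 by (intro mult_right_mono) auto
      also have "\<dots> = Sc / 2" using C1 by simp
      finally have "2 * t * C \<le> Sc / 2" .
      then have "2 * t * (C - 1) < Sc" using Sc0 t0 by argo
      then have "t * (2 * t * (C - 1)) < t * Sc" using t0 by (intro mult_strict_left_mono) auto
      then show ?thesis by (simp add: power2_eq_square algebra_simps)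
    qed
    ultimately have "\<phi> y > \<phi> w" using phy by argo
    then show False using gmax[OF yK yz] by simp
  qed
  have vne: "v \<noteq> 0" using vpos by (metis less_irrefl zero_index)
  have nv: "norm v > 0" using vne by simp
  have notint: "w \<notin> interior (convex hull F)"
  proof
    assume "w \<in> interior (convex hull F)"
    then obtain e where e: "e > 0" "ball w e \<subseteq> convex hull F" by (auto simp: mem_interior)
    define y where "y = w + (e / (2 * norm v)) *\<^sub>R v"
    have "dist w y = e / 2" unfolding y_def dist_norm using nv e by simp
    then have "y \<in> ball w e" using e by simp
    then have "y \<in> K" unfolding K_def using e(2) closure_subset by blast
    then have "v \<bullet> y \<le> v \<bullet> w" by (rule supp)
    moreover have "v \<bullet> y = v \<bullet> w + (e / (2 * norm v)) * (v \<bullet> v)" unfolding y_def by (simp add: inner_add_right)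
    moreover have "(e / (2 * norm v)) * (v \<bullet> v) > 0" using e nv vne by simp
    ultimately show False by argo
  qed
  have "w \<in> pos_facing_boundary (convex hull F)"
    unfolding pos_facing_boundary_def frontier_def
  proof (intro CollectI conjI exI)
    show "w \<in> closure (convex hull F) - interior (convex hull F)" using wK notint unfolding K_def by blast
    show "\<forall>\<omega>. 0 < v $ \<omega>" using vpos by blast
    show "\<forall>x\<in>convex hull F. v \<bullet> x \<le> v \<bullet> w" using supp closure_subset unfolding K_def by blast
  qed
  then show ?thesis using wz' by blast
qed


definition zN :: "('w::finite \<Rightarrow> ereal) \<Rightarrow> nat \<Rightarrow> real^'w" where
  "zN z N = (\<chi> \<omega>. if z \<omega> = -\<infinity> then - real N else real_of_ereal (z \<omega>))"

lemma Delta_compact: "compact (Delta :: (real^'w::finite) set)"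
proof -
  have eq: "(Delta :: (real^'w) set) = (\<Inter>\<omega>\<in>UNIV. {q. 0 \<le> q$\<omega>}) \<inter> {q. (\<chi> i. 1) \<bullet> q = 1}"
    unfolding Delta_def by (auto simp: inner_vec_def)
  have cl: "closed (Delta :: (real^'w) set)" unfolding eq
    by (intro closed_Int closed_INT ballI closed_halfspace_component_ge_cart closed_hyperplane)
  have "(Delta :: (real^'w) set) \<subseteq> cbox 0 (\<chi> i. 1)"
  proof
    fix q :: "real^'w" assume q: "q \<in> Delta"
    have "q$\<omega> \<le> 1" for \<omega>
    proof -
      have "q$\<omega> \<le> (\<Sum>i\<in>UNIV. q$i)" by (rule member_le_sum) (use q in \<open>auto simp: Delta_def\<close>)
      then show ?thesis using q by (simp add: Delta_def)
    qed
    then show "q \<in> cbox 0 (\<chi> i. 1)" using q by (auto simp: mem_box_cart Delta_def)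
  qed
  then have "bounded (Delta :: (real^'w) set)" using bounded_cbox bounded_subset by blast
  then show ?thesis using cl compact_eq_bounded_closed by blast
qed

lemma zN_mono: assumes "N \<le> N'" "q \<in> Delta" shows "q \<bullet> zN z N' \<le> q \<bullet> zN z N"
  unfolding inner_vec_def
proof (rule sum_mono)
  fix \<omega> :: 'a
  have "zN z N' $ \<omega> \<le> zN z N $ \<omega>" unfolding zN_def using assms(1) by auto
  then show "q $ \<omega> \<bullet> zN z N' $ \<omega> \<le> q $ \<omega> \<bullet> zN z N $ \<omega>"
    using assms(2) by (simp add: Delta_def mult_left_mono)
qed

definition condA :: "(('w::finite set \<Rightarrow> real) \<Rightarrow> 'w \<Rightarrow> ereal) \<Rightarrow> real \<Rightarrow> bool" where
  "condA s M \<longleftrightarrow> (\<forall>z::'w\<Rightarrow>ereal. (\<forall>\<omega>. z \<omega> \<le> ereal M) \<longrightarrow> (\<forall>q\<in>Probs. Exp q z < Exp q (s q))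
      \<longrightarrow> (\<exists>p\<in>Probs. strictly_dominates (s p) z))"

locale srule =
  fixes s :: "('w::finite set \<Rightarrow> real) \<Rightarrow> 'w \<Rightarrow> ereal" and M :: real
  assumes bounded: "\<forall>p\<in>Probs. \<forall>\<omega>. s p \<omega> \<le> ereal M"
    and proper: "proper_on Probs s"
    and fin: "\<forall>p\<in>Probs. Exp p (s p) \<noteq> -\<infinity>"
begin

abbreviation "F \<equiv> finite_scores s"

definition g where "g p = real_of_ereal (Exp p (s p))"

lemma sM: "p \<in> Probs \<Longrightarrow> s p \<omega> \<le> ereal M" using bounded by auto

lemma G_eq: assumes "p \<in> Probs" shows "Exp p (s p) = ereal (g p)"
proof -
  have "Exp p (s p) \<noteq> \<infinity>" using Exp_neq_inf[OF assms sM[OF assms]] .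
  moreover have "Exp p (s p) \<noteq> -\<infinity>" using fin assms by auto
  ultimately show ?thesis unfolding g_def by (intro ereal_real'[symmetric]) auto
qed

lemma proper': "p \<in> Probs \<Longrightarrow> c \<in> Probs \<Longrightarrow> Exp p (s c) \<le> ereal (g p)"
  using proper G_eq unfolding proper_on_def by auto

lemma s_ne_minf: assumes "p \<in> Probs" "p {\<omega>} > 0" shows "s p \<omega> \<noteq> -\<infinity>"
  using Exp_minf[OF assms(1) sM[OF assms(1)] assms(2)] fin assms(1) by auto

lemma pos_finite: assumes "p \<in> Probs" "\<And>\<omega>. p {\<omega>} > 0" shows "finite_score (s p)"
  unfolding finite_score_def
proof
  fix \<omega> show "\<bar>s p \<omega>\<bar> < \<infinity>" using s_ne_minf[OF assms(1) assms(2)] sM[OF assms(1), of \<omega>]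
    by (cases "s p \<omega>") auto
qed

definition sv where "sv p = (\<chi> \<omega>. real_of_ereal (s p \<omega>))"

lemma sv_eq: "finite_score (s p) \<Longrightarrow> s p \<omega> = ereal (sv p $ \<omega>)"
  unfolding finite_score_def sv_def by (simp add: ereal_real')

lemma sv_F: "p \<in> Probs \<Longrightarrow> finite_score (s p) \<Longrightarrow> sv p \<in> F"
  unfolding finite_scores_def using sv_eq by blast

lemma sv_fun: "finite_score (s p) \<Longrightarrow> s p = (\<lambda>\<omega>. ereal (sv p $ \<omega>))"
  using sv_eq by auto

lemma F_le: assumes q: "q \<in> Probs" and x: "x \<in> F" shows "pv q \<bullet> x \<le> g q"
proof -
  obtain p where p: "p \<in> Probs" "\<forall>\<omega>. s p \<omega> = ereal (x$\<omega>)" using x unfolding finite_scores_def by auto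
  have "s p = (\<lambda>\<omega>. ereal (x$\<omega>))" using p by auto
  then have "Exp q (s p) = ereal (pv q \<bullet> x)" by (simp add: Exp_real)
  then show ?thesis using proper'[OF q p(1)] by simp
qed

lemma F_M: assumes "x \<in> F" shows "x $ \<omega> \<le> M"
proof -
  obtain p where p: "p \<in> Probs" "\<forall>\<omega>. s p \<omega> = ereal (x$\<omega>)" using assms unfolding finite_scores_def by auto
  then show ?thesis using sM[OF p(1), of \<omega>] by simp
qed

lemma clF_le: assumes q: "q \<in> Probs" and x: "x \<in> closure (convex hull F)" shows "pv q \<bullet> x \<le> g q"
proof -
  have "convex hull F \<subseteq> {x. pv q \<bullet> x \<le> g q}"
    by (rule hull_minimal) (use F_le[OF q] convex_halfspace_le in auto)
  then have "closure (convex hull F) \<subseteq> {x. pv q \<bullet> x \<le> g q}"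
    by (rule closure_minimal) (rule closed_halfspace_le)
  then show ?thesis using x by auto
qed

lemma clF_M: assumes x: "x \<in> closure (convex hull F)" shows "x $ \<omega> \<le> M"
proof -
  have "convex hull F \<subseteq> {x. x $ \<omega> \<le> M}"
    by (rule hull_minimal) (use F_M convex_comp_le in auto)
  then have "closure (convex hull F) \<subseteq> {x. x $ \<omega> \<le> M}"
    by (rule closure_minimal) (rule closed_comp_le)
  then show ?thesis using x by auto
qed


lemma dom_finite: assumes p: "p \<in> Probs" and d: "strictly_dominates (s p) z"
  shows "finite_score (s p)"
  unfolding finite_score_def
proof
  fix \<omega>
  have "z \<omega> < s p \<omega>" using d unfolding strictly_dominates_def by auto
  then have "s p \<omega> \<noteq> -\<infinity>" by auto
  then show "\<bar>s p \<omega>\<bar> < \<infinity>" using sM[OF p, of \<omega>] by (cases "s p \<omega>") auto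
qed

lemma inner_const: "q \<in> Probs \<Longrightarrow> pv q \<bullet> (\<chi> i. c) = c"
proof -
  assume q: "q \<in> Probs"
  have "pv q \<bullet> (\<chi> i. c) = (\<Sum>\<omega>\<in>UNIV. q {\<omega>}) * c" unfolding inner_pv by (simp add: sum_distrib_right)
  then show ?thesis using prob_total[OF q] by simp
qed

lemma A_ii: assumes A: "condA s M"
  shows "dense_in_set F (pos_facing_boundary (convex hull F))"
  unfolding dense_in_set_def
proof (intro allI impI)
  fix U assume U: "open U" "U \<inter> pos_facing_boundary (convex hull F) \<noteq> {}"
  then obtain w where wU: "w \<in> U" and wB: "w \<in> pos_facing_boundary (convex hull F)" by blast
  from wB obtain v where wcl: "w \<in> closure (convex hull F)" and vpos: "\<forall>\<omega>. 0 < v$\<omega>"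
    and vsup: "\<forall>x\<in>convex hull F. v \<bullet> x \<le> v \<bullet> w"
    unfolding pos_facing_boundary_def frontier_def by blast
  obtain r where r: "r > 0" "ball w r \<subseteq> U" using U(1) wU open_contains_ball by blast
  define V where "V = (\<Sum>\<omega>\<in>UNIV. v$\<omega>)"
  define m where "m = Min (range (\<lambda>\<omega>. v$\<omega>))"
  have m1: "m \<le> v$\<omega>" for \<omega> unfolding m_def by (rule Min_le) auto
  have m0: "m > 0" unfolding m_def using vpos by (subst Min_gr_iff) auto
  have V0: "V \<ge> 0" unfolding V_def using vpos by (simp add: sum_nonneg less_imp_le)
  define K where "K = 1 + V / m"
  have K1: "K \<ge> 1" unfolding K_def using V0 m0 by simp
  define n where "n = real CARD('w)"
  have n0: "n > 0" unfolding n_def by simp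
  define \<epsilon> where "\<epsilon> = r / (2 * n * K)"
  have \<epsilon>0: "\<epsilon> > 0" unfolding \<epsilon>_def using r n0 K1 by simp
  define z where "z = (\<lambda>\<omega>. ereal ((w - (\<chi> i. \<epsilon>))$\<omega>))"
  have zM: "\<forall>\<omega>. z \<omega> \<le> ereal M"
  proof
    fix \<omega> show "z \<omega> \<le> ereal M" unfolding z_def using clF_M[OF wcl, of \<omega>] \<epsilon>0 by simp
  qed
  have zlt: "\<forall>q\<in>Probs. Exp q z < Exp q (s q)"
  proof
    fix q :: "'w set \<Rightarrow> real" assume q: "q \<in> Probs"
    have "Exp q z = ereal (pv q \<bullet> (w - (\<chi> i. \<epsilon>)))" unfolding z_def by (rule Exp_real)
    also have "pv q \<bullet> (w - (\<chi> i. \<epsilon>)) = pv q \<bullet> w - \<epsilon>" using inner_const[OF q] by (simp add: inner_diff_right)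
    finally have "Exp q z = ereal (pv q \<bullet> w - \<epsilon>)" .
    moreover have "pv q \<bullet> w \<le> g q" by (rule clF_le[OF q wcl])
    ultimately show "Exp q z < Exp q (s q)" using G_eq[OF q] \<epsilon>0 by simp
  qed
  from A zM zlt obtain p where p: "p \<in> Probs" "strictly_dominates (s p) z"
    unfolding condA_def by blast
  have fs: "finite_score (s p)" by (rule dom_finite[OF p])
  define u where "u = sv p"
  have uF: "u \<in> F" unfolding u_def by (rule sv_F[OF p(1) fs])
  have ugt: "u$\<omega> > w$\<omega> - \<epsilon>" for \<omega>
  proof -
    have "z \<omega> < s p \<omega>" using p(2) unfolding strictly_dominates_def by auto
    then show ?thesis unfolding z_def u_def using sv_eq[OF fs, of \<omega>] by simp
  qed
  have vuw: "v \<bullet> u \<le> v \<bullet> w" using vsup hull_inc[OF uF] by blast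
  have bnd: "\<bar>u$\<omega> - w$\<omega>\<bar> \<le> \<epsilon> * K" for \<omega>
  proof -
    have e1: "(\<Sum>i\<in>UNIV. v$i * ((u$i - w$i) + \<epsilon>)) = v \<bullet> (u - w + (\<chi> i. \<epsilon>))"
      by (simp add: inner_vec_def)
    have e2: "v \<bullet> (u - w + (\<chi> i. \<epsilon>)) = v \<bullet> u - v \<bullet> w + v \<bullet> (\<chi> i. \<epsilon>)"
      by (simp add: inner_add_right inner_diff_right)
    have e3: "v \<bullet> (\<chi> i. \<epsilon>) = \<epsilon> * V" unfolding V_def inner_vec_def
      by (simp add: sum_distrib_left mult.commute)
    have "(\<Sum>i\<in>UNIV. v$i * ((u$i - w$i) + \<epsilon>)) = v \<bullet> u - v \<bullet> w + \<epsilon> * V"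
      using e1 e2 e3 by simp
    also have "\<dots> \<le> \<epsilon> * V" using vuw by simp
    finally have S: "(\<Sum>i\<in>UNIV. v$i * ((u$i - w$i) + \<epsilon>)) \<le> \<epsilon> * V" .
    have "v$\<omega> * ((u$\<omega> - w$\<omega>) + \<epsilon>) \<le> (\<Sum>i\<in>UNIV. v$i * ((u$i - w$i) + \<epsilon>))"
    proof (rule member_le_sum)
      fix i assume "i \<in> UNIV - {\<omega>}"
      have "0 < v$i * ((u$i - w$i) + \<epsilon>)" using vpos ugt[of i] by (intro mult_pos_pos) auto
      then show "0 \<le> v$i * ((u$i - w$i) + \<epsilon>)" by simp
    qed auto
    with S have T: "v$\<omega> * ((u$\<omega> - w$\<omega>) + \<epsilon>) \<le> \<epsilon> * V" by linarith
    have "m * ((u$\<omega> - w$\<omega>) + \<epsilon>) \<le> v$\<omega> * ((u$\<omega> - w$\<omega>) + \<epsilon>)"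
      using m1[of \<omega>] ugt[of \<omega>] by (intro mult_right_mono) auto
    with T have "m * ((u$\<omega> - w$\<omega>) + \<epsilon>) \<le> \<epsilon> * V" by linarith
    then have "(u$\<omega> - w$\<omega>) + \<epsilon> \<le> \<epsilon> * V / m" using m0 by (simp add: field_simps)
    then have up: "u$\<omega> - w$\<omega> \<le> \<epsilon> * (V / m)" using \<epsilon>0 by (simp; linarith)
    have eK: "\<epsilon> * K = \<epsilon> + \<epsilon> * (V / m)" unfolding K_def by (simp add: distrib_left)
    have nn: "\<epsilon> * (V / m) \<ge> 0" using \<epsilon>0 V0 m0 by simp
    have b: "\<epsilon> * (V / m) \<le> \<epsilon> * K" unfolding eK using \<epsilon>0 by simp
    have c: "\<epsilon> \<le> \<epsilon> * K" unfolding eK using nn by simp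
    have a1: "u$\<omega> - w$\<omega> \<le> \<epsilon>*K" using up b by (rule order_trans)
    have "-(u$\<omega> - w$\<omega>) \<le> \<epsilon>" using ugt[of \<omega>] by simp
    then have a2: "-(u$\<omega> - w$\<omega>) \<le> \<epsilon>*K" using c by (rule order_trans)

    show ?thesis using a1 a2 by (simp add: abs_le_iff)
  qed
  have "dist u w \<le> (\<Sum>i\<in>UNIV. \<bar>(u - w)$i\<bar>)" unfolding dist_norm by (rule norm_le_l1_cart)
  also have "\<dots> \<le> (\<Sum>i\<in>(UNIV::'w set). \<epsilon> * K)" by (rule sum_mono) (use bnd in auto)
  also have "\<dots> = n * (\<epsilon> * K)" unfolding n_def by simp
  also have "\<dots> = r / 2" unfolding \<epsilon>_def using n0 K1 by (simp add: field_simps)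
  finally have "dist u w < r" using r by simp
  then have "u \<in> ball w r" by (simp add: dist_commute)
  then have "u \<in> U" using r(2) by blast
  then show "U \<inter> F \<noteq> {}" using uF by blast
qed

lemma g_sv: assumes "p \<in> Probs" "finite_score (s p)" shows "g p = pv p \<bullet> sv p"
proof -
  have "ereal (g p) = Exp p (s p)" using G_eq[OF assms(1)] by simp
  also have "\<dots> = ereal (pv p \<bullet> sv p)" using sv_fun[OF assms(2)] Exp_real by metis
  finally show ?thesis by simp
qed

lemma inner_cont: assumes "\<forall>\<omega>. (\<lambda>n. ps n {\<omega>}) \<longlonglongrightarrow> p {\<omega>}"
  shows "(\<lambda>n. pv (ps n) \<bullet> x) \<longlonglongrightarrow> pv p \<bullet> x"
  unfolding inner_pv by (intro tendsto_intros) (use assms in auto)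

lemma upper_mix: assumes p: "p \<in> Probs" and q: "q \<in> Probs" and x: "x \<in> F"
  and t: "0 \<le> t" "t \<le> 1" and le: "\<And>\<omega>. (1 - t) * p {\<omega>} \<le> q {\<omega>}"
  shows "pv q \<bullet> x \<le> (1 - t) * g p + t * M"
proof -
  define r where "r \<omega> = q {\<omega>} - (1 - t) * p {\<omega>}" for \<omega>
  have r0: "0 \<le> r \<omega>" for \<omega> using le[of \<omega>] unfolding r_def by simp
  have rs: "(\<Sum>\<omega>\<in>UNIV. r \<omega>) = t"
    unfolding r_def using prob_total[OF p] prob_total[OF q]
    by (simp add: sum_subtractf sum_distrib_left[symmetric])
  have "pv q \<bullet> x = (\<Sum>\<omega>\<in>UNIV. (1 - t) * (p {\<omega>} * x$\<omega>) + r \<omega> * x$\<omega>)"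
    unfolding inner_pv r_def by (rule sum.cong) (auto simp: algebra_simps)
  also have "\<dots> = (1 - t) * (pv p \<bullet> x) + (\<Sum>\<omega>\<in>UNIV. r \<omega> * x$\<omega>)"
    unfolding inner_pv by (simp add: sum.distrib sum_distrib_left)
  also have "\<dots> \<le> (1 - t) * g p + (\<Sum>\<omega>\<in>UNIV. r \<omega> * M)"
  proof (rule add_mono)
    show "(1 - t) * (pv p \<bullet> x) \<le> (1 - t) * g p" using F_le[OF p x] t by (intro mult_left_mono) auto
    show "(\<Sum>\<omega>\<in>UNIV. r \<omega> * x$\<omega>) \<le> (\<Sum>\<omega>\<in>UNIV. r \<omega> * M)"
      by (rule sum_mono, rule mult_left_mono) (use F_M[OF x] r0 in auto)
  qed
  also have "(\<Sum>\<omega>\<in>UNIV. r \<omega> * M) = t * M" using rs by (simp add: sum_distrib_right[symmetric])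
  finally show ?thesis .
qed

lemma A_i: assumes A: "condA s M"
  and ps: "\<forall>n. ps n \<in> Probs" and p: "p \<in> Probs"
  and conv: "\<forall>\<omega>. (\<lambda>n. ps n {\<omega>}) \<longlonglongrightarrow> p {\<omega>}"
  and fs: "\<forall>n. finite_score (s (ps n))"
  shows "(\<lambda>n. Exp (ps n) (s (ps n))) \<longlonglongrightarrow> Exp p (s p)"
proof -
  have gps: "g (ps n) = pv (ps n) \<bullet> sv (ps n)" for n using g_sv ps fs by auto
  have svF: "sv (ps n) \<in> F" for n using sv_F ps fs by auto
  have "(\<lambda>n. g (ps n)) \<longlonglongrightarrow> g p"
  proof (rule order_tendstoI)
    fix a assume a: "a < g p"
    define \<epsilon> where "\<epsilon> = g p - a"
    have \<epsilon>0: "\<epsilon> > 0" using a unfolding \<epsilon>_def by simp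
    define z where "z = (\<lambda>\<omega>. s p \<omega> + ereal (- \<epsilon> / 2))"
    have sp_ninf: "s p \<omega> \<noteq> \<infinity>" for \<omega> using sM[OF p, of \<omega>] by auto
    have zle: "z \<omega> \<le> s p \<omega>" for \<omega> unfolding z_def using \<epsilon>0 sp_ninf[of \<omega>]
      by (cases "s p \<omega>") auto
    have zM: "\<forall>\<omega>. z \<omega> \<le> ereal M" using zle sM[OF p] order_trans by blast
    have zlt: "\<forall>q\<in>Probs. Exp q z < Exp q (s q)"
    proof
      fix q :: "'w set \<Rightarrow> real" assume q: "q \<in> Probs"
      have "Exp q z = Exp q (s p) + ereal (- \<epsilon> / 2)" unfolding z_def by (rule Exp_shift[OF q sp_ninf])
      also have "\<dots> \<le> ereal (g q) + ereal (- \<epsilon> / 2)" using proper'[OF q p] by (rule add_right_mono)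
      also have "\<dots> < ereal (g q)" using \<epsilon>0 by simp
      finally show "Exp q z < Exp q (s q)" using G_eq[OF q] by simp
    qed
    from A zM zlt obtain p' where p': "p' \<in> Probs" "strictly_dominates (s p') z"
      unfolding condA_def by blast
    have fs': "finite_score (s p')" by (rule dom_finite[OF p'])
    define x where "x = sv p'"
    have xF: "x \<in> F" unfolding x_def by (rule sv_F[OF p'(1) fs'])
    have "Exp p z \<le> Exp p (s p')"
      using p'(2) unfolding strictly_dominates_def by (intro Exp_mono[OF p]) (auto intro: less_imp_le)
    moreover have "Exp p z = ereal (g p - \<epsilon> / 2)"
      unfolding z_def Exp_shift[OF p sp_ninf] G_eq[OF p] by simp
    moreover have "Exp p (s p') = ereal (pv p \<bullet> x)"
      unfolding x_def using sv_fun[OF fs'] Exp_real by metis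
    ultimately have px: "pv p \<bullet> x \<ge> g p - \<epsilon> / 2" by simp
    have "a < pv p \<bullet> x" using px \<epsilon>0 unfolding \<epsilon>_def by argo
    then have "eventually (\<lambda>n. a < pv (ps n) \<bullet> x) sequentially"
      by (rule order_tendstoD(1)[OF inner_cont[OF conv]])
    then show "eventually (\<lambda>n. a < g (ps n)) sequentially"
    proof (rule eventually_mono)
      fix n assume "a < pv (ps n) \<bullet> x"
      moreover have "pv (ps n) \<bullet> x \<le> g (ps n)" by (rule F_le[OF ps[rule_format] xF])
      ultimately show "a < g (ps n)" by simp
    qed
  next
    fix b assume b: "g p < b"
    define P where "P = {\<omega>. p {\<omega>} > 0}"
    have Pne: "P \<noteq> {}"
    proof
      assume "P = {}"
      then have "\<forall>\<omega>. p {\<omega>} = 0" unfolding P_def using prob_nonneg[OF p] by (metis empty_iff less_eq_real_def mem_Collect_eq)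
      then show False using prob_total[OF p] by simp
    qed
    define m where "m = Min ((\<lambda>\<omega>. p {\<omega>}) ` P)"
    have m0: "m > 0" unfolding m_def using Pne by (subst Min_gr_iff) (auto simp: P_def)
    have m1: "\<omega> \<in> P \<Longrightarrow> m \<le> p {\<omega>}" for \<omega> unfolding m_def by (rule Min_le) auto
    define d where "d n = (\<Sum>\<omega>\<in>UNIV. \<bar>ps n {\<omega>} - p {\<omega>}\<bar>)" for n
    have d0: "d \<longlonglongrightarrow> 0"
    proof -
      have "(\<lambda>n. \<Sum>\<omega>\<in>UNIV. \<bar>ps n {\<omega>} - p {\<omega>}\<bar>) \<longlonglongrightarrow> (\<Sum>\<omega>\<in>(UNIV::'w set). \<bar>p {\<omega>} - p {\<omega>}\<bar>)"
        by (intro tendsto_intros) (use conv in auto)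
      then show ?thesis unfolding d_def by simp
    qed
    define t where "t n = d n / m" for n
    have t0: "t \<longlonglongrightarrow> 0" unfolding t_def using tendsto_divide[OF d0 tendsto_const[of m]] m0 by simp
    have tnn: "0 \<le> t n" for n unfolding t_def d_def using m0 by (simp add: sum_nonneg)
    have lim: "(\<lambda>n. (1 - t n) * g p + t n * M) \<longlonglongrightarrow> (1 - 0) * g p + 0 * M"
      by (intro tendsto_intros t0)
    have ev1: "eventually (\<lambda>n. (1 - t n) * g p + t n * M < b) sequentially"
      using order_tendstoD(2)[OF lim] b by simp
    have ev2: "eventually (\<lambda>n. t n < 1) sequentially"
      using order_tendstoD(2)[OF t0] by simp
    show "eventually (\<lambda>n. g (ps n) < b) sequentially"
      using ev1 ev2
    proof eventually_elim
      case (elim n)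
      have le: "(1 - t n) * p {\<omega>} \<le> ps n {\<omega>}" for \<omega>
      proof (cases "\<omega> \<in> P")
        case True
        have "\<bar>ps n {\<omega>} - p {\<omega>}\<bar> \<le> d n" unfolding d_def by (rule member_le_sum) auto
        moreover have "t n * m = d n" unfolding t_def using m0 by simp
        moreover have "t n * m \<le> t n * p {\<omega>}" using m1[OF True] tnn[of n] by (rule mult_left_mono)
        ultimately show ?thesis by (simp add: algebra_simps)
      next
        case False
        then have "p {\<omega>} = 0" unfolding P_def using prob_nonneg[OF p, of "{\<omega>}"] by simp
        then show ?thesis using prob_nonneg[OF ps[rule_format]] by simp
      qed
      have "g (ps n) = pv (ps n) \<bullet> sv (ps n)" by (rule gps)
      also have "\<dots> \<le> (1 - t n) * g p + t n * M"
        by (rule upper_mix[OF p ps[rule_format] svF tnn]) (use elim le in auto)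
      finally show ?case using elim by simp
    qed
  qed
  then have "(\<lambda>n. ereal (g (ps n))) \<longlonglongrightarrow> ereal (g p)" by (simp add: lim_ereal)
  then show ?thesis using G_eq ps p by simp
qed

definition condi :: "bool" where
  "condi \<longleftrightarrow> (\<forall>(ps :: nat \<Rightarrow> 'w set \<Rightarrow> real) p.
          (\<forall>n. ps n \<in> Probs) \<longrightarrow> p \<in> Probs \<longrightarrow>
          (\<forall>\<omega>. (\<lambda>n. ps n {\<omega>}) \<longlonglongrightarrow> p {\<omega>}) \<longrightarrow>
          (\<forall>n. finite_score (s (ps n))) \<longrightarrow> \<not> finite_score (s p) \<longrightarrow>
          (\<lambda>n. Exp (ps n) (s (ps n))) \<longlonglongrightarrow> Exp p (s p))"

lemma unif_Probs: "pf unif \<in> Probs" by (rule pf_Probs[OF unif_Delta])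

lemma i_h: assumes ci: condi and p: "p \<in> Probs" and e: "\<epsilon> > 0"
  shows "\<exists>u\<in>F. pv p \<bullet> u > g p - \<epsilon>"
proof (cases "finite_score (s p)")
  case True
  then show ?thesis using sv_F[OF p True] g_sv[OF p True] e by (intro bexI[of _ "sv p"]) auto
next
  case False
  define t where "t n = inverse (real (Suc n)) / 2" for n
  have t0: "t \<longlonglongrightarrow> 0" unfolding t_def using tendsto_divide[OF LIMSEQ_inverse_real_of_nat tendsto_const[of 2]] by simp
  have tpos: "0 < t n" for n unfolding t_def by simp
  have tle: "t n \<le> 1/2" for n unfolding t_def by (simp add: field_simps)
  define qv where "qv n = (1 - t n) *\<^sub>R pv p + t n *\<^sub>R unif" for n
  define qs where "qs n = pf (qv n)" for n
  have qvc: "qv n $ \<omega> = (1 - t n) * p {\<omega>} + t n * (1 / real CARD('w))" for n \<omega>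
    unfolding qv_def unif_def by simp
  have qvD: "qv n \<in> Delta" for n
  proof -
    have "0 \<le> qv n $ \<omega>" for \<omega> unfolding qvc using tpos[of n] tle[of n] prob_nonneg[OF p]
      by (intro add_nonneg_nonneg mult_nonneg_nonneg) auto
    moreover have "(\<Sum>\<omega>\<in>UNIV. qv n $ \<omega>) = 1"
    proof -
      have "(\<Sum>\<omega>\<in>UNIV. qv n $ \<omega>) = (1 - t n) * (\<Sum>\<omega>\<in>UNIV. p {\<omega>}) + t n * (\<Sum>\<omega>\<in>(UNIV::'w set). 1 / real CARD('w))"
        unfolding qvc by (simp add: sum.distrib sum_distrib_left)
      then show ?thesis using prob_total[OF p] by simp
    qed
    ultimately show ?thesis unfolding Delta_def by auto
  qed
  have qsP: "qs n \<in> Probs" for n unfolding qs_def by (rule pf_Probs[OF qvD])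
  have qspos: "qs n {\<omega>} > 0" for n \<omega> unfolding qs_def pf_single qvc using tpos[of n] tle[of n] prob_nonneg[OF p]
    by (intro add_nonneg_pos mult_nonneg_nonneg mult_pos_pos) auto
  have qsfin: "finite_score (s (qs n))" for n by (rule pos_finite[OF qsP qspos])
  have qsconv: "\<forall>\<omega>. (\<lambda>n. qs n {\<omega>}) \<longlonglongrightarrow> p {\<omega>}"
  proof
    fix \<omega>
    have "(\<lambda>n. (1 - t n) * p {\<omega>} + t n * (1 / real CARD('w))) \<longlonglongrightarrow> (1 - 0) * p {\<omega>} + 0 * (1 / real CARD('w))"
      by (intro tendsto_intros t0)
    then show "(\<lambda>n. qs n {\<omega>}) \<longlonglongrightarrow> p {\<omega>}" unfolding qs_def pf_single qvc by simp
  qed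
  have "(\<lambda>n. Exp (qs n) (s (qs n))) \<longlonglongrightarrow> Exp p (s p)"
    using ci qsP p qsconv qsfin False unfolding condi_def by blast
  then have "(\<lambda>n. ereal (g (qs n))) \<longlonglongrightarrow> ereal (g p)" using G_eq qsP p by simp
  then have gconv: "(\<lambda>n. g (qs n)) \<longlonglongrightarrow> g p" by (simp add: lim_ereal)
  define u where "u = pf (unif :: real^'w)"
  have key: "pv p \<bullet> sv (qs n) \<ge> (g (qs n) - t n * g u) / (1 - t n)" for n
  proof -
    have "g (qs n) = pv (qs n) \<bullet> sv (qs n)" by (rule g_sv[OF qsP qsfin])
    also have "\<dots> = (1 - t n) * (pv p \<bullet> sv (qs n)) + t n * (pv u \<bullet> sv (qs n))"
      unfolding qs_def qv_def u_def by (simp only: inner_add_left inner_scaleR_left pv_pf)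
    also have "pv u \<bullet> sv (qs n) \<le> g u" by (rule F_le[OF _ sv_F[OF qsP qsfin]]) (simp add: u_def unif_Probs)
    then have "t n * (pv u \<bullet> sv (qs n)) \<le> t n * g u" using tpos[of n] by (intro mult_left_mono) auto
    finally have "g (qs n) - t n * g u \<le> (1 - t n) * (pv p \<bullet> sv (qs n))" by simp
    moreover have "1 - t n > 0" using tle[of n] by simp
    ultimately show ?thesis by (subst pos_divide_le_eq) (auto simp: mult.commute)
  qed
  have "(\<lambda>n. (g (qs n) - t n * g u) / (1 - t n)) \<longlonglongrightarrow> (g p - 0 * g u) / (1 - 0)"
    by (intro tendsto_intros gconv t0) simp
  then have "eventually (\<lambda>n. g p - \<epsilon> < (g (qs n) - t n * g u) / (1 - t n)) sequentially"
    using e by (intro order_tendstoD(1)) auto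
  then obtain N where "\<forall>n\<ge>N. g p - \<epsilon> < (g (qs n) - t n * g u) / (1 - t n)"
    by (auto simp: eventually_sequentially)
  then have "g p - \<epsilon> < (g (qs N) - t N * g u) / (1 - t N)" by simp
  then obtain n where "g p - \<epsilon> < (g (qs n) - t n * g u) / (1 - t n)" by blast
  then have "g p - \<epsilon> < pv p \<bullet> sv (qs n)" using key[of n] by simp
  then show ?thesis using sv_F[OF qsP qsfin] by blast
qed

lemma pointwise_cover:
  assumes ci: condi and zM: "\<forall>\<omega>. z \<omega> \<le> ereal M" and zlt: "\<forall>q\<in>Probs. Exp q z < Exp q (s q)"
    and q: "q \<in> Delta"
  shows "\<exists>N. \<exists>u\<in>F. q \<bullet> zN z N < q \<bullet> u"
proof -
  define p where "p = pf q"
  have p: "p \<in> Probs" unfolding p_def by (rule pf_Probs[OF q])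
  have pvp: "pv p = q" unfolding p_def by simp
  have qnn: "0 \<le> q$\<omega>" for \<omega> using q by (simp add: Delta_def)
  show ?thesis
  proof (cases "\<exists>\<omega>. z \<omega> = -\<infinity> \<and> 0 < q$\<omega>")
    case True
    then obtain \<omega>0 where \<omega>0: "z \<omega>0 = -\<infinity>" "0 < q$\<omega>0" by blast
    define u0 where "u0 = sv (pf (unif :: real^'w))"
    have u0F: "u0 \<in> F" unfolding u0_def by (rule sv_F[OF unif_Probs pos_finite[OF unif_Probs unif_pos]])
    define A where "A = (\<Sum>\<omega>\<in>UNIV. q$\<omega> * (if z \<omega> = -\<infinity> then 0 else real_of_ereal (z \<omega>)))"
    define Bq where "Bq = (\<Sum>\<omega>\<in>UNIV. q$\<omega> * (if z \<omega> = -\<infinity> then 1 else 0))"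
    have eq: "q \<bullet> zN z N = A - real N * Bq" for N
    proof -
      have "q \<bullet> zN z N = (\<Sum>\<omega>\<in>UNIV. q$\<omega> * (if z \<omega> = -\<infinity> then 0 else real_of_ereal (z \<omega>))
                  - real N * (q$\<omega> * (if z \<omega> = -\<infinity> then 1 else 0)))"
        unfolding inner_vec_def zN_def by (rule sum.cong) auto
      then show ?thesis unfolding A_def Bq_def by (simp add: sum_subtractf sum_distrib_left)
    qed
    have "q$\<omega>0 \<le> Bq"
    proof -
      have "q$\<omega>0 * (if z \<omega>0 = -\<infinity> then 1 else 0) \<le> Bq" unfolding Bq_def
        by (rule member_le_sum) (auto simp: qnn)
      then show ?thesis using \<omega>0 by simp
    qed
    then have Bq0: "Bq > 0" using \<omega>0 by simp
    obtain N where N: "A - q \<bullet> u0 < real N * Bq" using reals_Archimedean3[OF Bq0] by blast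
    then have "q \<bullet> zN z N < q \<bullet> u0" unfolding eq by argo
    then show ?thesis using u0F by blast
  next
    case False
    then have q0: "z \<omega> = -\<infinity> \<Longrightarrow> q$\<omega> = 0" for \<omega> using qnn[of \<omega>] by force
    have "Exp p z = (\<Sum>\<omega>\<in>UNIV. ereal (q$\<omega> * zN z 0 $ \<omega>))"
      unfolding Exp_all
    proof (rule sum.cong)
      fix \<omega> :: 'w
      show "ereal (p {\<omega>}) * z \<omega> = ereal (q $ \<omega> * zN z 0 $ \<omega>)"
      proof (cases "z \<omega> = -\<infinity>")
        case True then show ?thesis using q0[OF True] unfolding p_def by (simp add: zN_def)
      next
        case False
        have "z \<omega> \<noteq> \<infinity>" using zM[rule_format, of \<omega>] by auto
        then have "z \<omega> = ereal (real_of_ereal (z \<omega>))" using False by (cases "z \<omega>") auto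
        note zr = this
        have "zN z 0 $ \<omega> = real_of_ereal (z \<omega>)" unfolding zN_def using False by simp
        then show ?thesis unfolding p_def pf_single by (subst zr) simp
      qed
    qed simp
    also have "\<dots> = ereal (q \<bullet> zN z 0)" by (simp add: sum_ereal inner_vec_def)
    finally have "ereal (q \<bullet> zN z 0) < ereal (g p)" using zlt p G_eq[OF p] by auto
    then have lt: "q \<bullet> zN z 0 < g p" by simp
    obtain u where u: "u \<in> F" "pv p \<bullet> u > g p - (g p - q \<bullet> zN z 0)"
      using i_h[OF ci p, of "g p - q \<bullet> zN z 0"] lt by auto
    then show ?thesis using pvp by auto
  qed
qed

lemma cover:
  assumes ci: condi and zM: "\<forall>\<omega>. z \<omega> \<le> ereal M" and zlt: "\<forall>q\<in>Probs. Exp q z < Exp q (s q)"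
  shows "\<exists>N. \<forall>q\<in>Delta. \<exists>u\<in>F. q \<bullet> zN z N < q \<bullet> u"
proof -
  define f where "f = (\<lambda>(N::nat, u::real^'w). {q::real^'w. q \<bullet> zN z N < q \<bullet> u})"
  have op: "open (f i)" for i
  proof -
    obtain N u where i: "i = (N, u)" by (cases i)
    show ?thesis unfolding i f_def by (simp, intro open_Collect_less continuous_intros)
  qed
  have cov: "Delta \<subseteq> \<Union> (f ` (UNIV \<times> F))"
  proof
    fix q :: "real^'w" assume "q \<in> Delta"
    then obtain N u where "u \<in> F" "q \<bullet> zN z N < q \<bullet> u" using pointwise_cover[OF ci zM zlt] by blast
    then have "q \<in> f (N, u)" "(N, u) \<in> UNIV \<times> F" unfolding f_def by auto
    then show "q \<in> \<Union> (f ` (UNIV \<times> F))" by blast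
  qed
  obtain J where J: "J \<subseteq> UNIV \<times> F" "finite J" "Delta \<subseteq> \<Union> (f ` J)"
  proof (rule compactE_image[OF Delta_compact, where C="UNIV \<times> F" and f=f])
    show "\<And>T. T \<in> UNIV \<times> F \<Longrightarrow> open (f T)" by (rule op)
    show "Delta \<subseteq> \<Union> (f ` (UNIV \<times> F))" by (rule cov)
  qed
  define N0 where "N0 = Max (insert 0 (fst ` J))"
  have "\<exists>u\<in>F. q \<bullet> zN z N0 < q \<bullet> u" if q: "q \<in> Delta" for q
  proof -
    obtain N u where Nu: "(N, u) \<in> J" "q \<in> f (N, u)" using J(3) q by auto
    have "N \<in> fst ` J" using Nu(1) by (rule image_eqI[rotated]) simp
    then have "N \<le> N0" unfolding N0_def by (intro Max_ge) (use J(2) in auto)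
    then have "q \<bullet> zN z N0 \<le> q \<bullet> zN z N" by (rule zN_mono[OF _ q])
    moreover have "q \<bullet> zN z N < q \<bullet> u" using Nu(2) unfolding f_def by simp
    moreover have "u \<in> F" using Nu(1) J(1) by auto
    ultimately have "q \<bullet> zN z N0 < q \<bullet> u" "u \<in> F" by argo+
    then show ?thesis by blast
  qed
  then show ?thesis by blast
qed

lemma i_ii_A: assumes ci: condi and dn: "dense_in_set F (pos_facing_boundary (convex hull F))"
  shows "condA s M"
  unfolding condA_def
proof (intro allI impI)
  fix z :: "'w \<Rightarrow> ereal"
  assume zM: "\<forall>\<omega>. z \<omega> \<le> ereal M" and zlt: "\<forall>q\<in>Probs. Exp q z < Exp q (s q)"
  obtain N where N: "\<forall>q\<in>Delta. \<exists>u\<in>F. q \<bullet> zN z N < q \<bullet> u" using cover[OF ci zM zlt] by blast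
  define zz where "zz = zN z N"
  obtain x0 where x0: "x0 \<in> convex hull F" "\<forall>\<omega>. zz$\<omega> < x0$\<omega>"
    using minimax[of F zz] N unfolding zz_def by blast
  have Mb: "\<forall>x\<in>F. \<forall>\<omega>. x$\<omega> \<le> M" using F_M by blast
  obtain w where w: "w \<in> pos_facing_boundary (convex hull F)" "\<forall>\<omega>. zz$\<omega> < w$\<omega>"
    using logbar[OF x0 Mb] by blast
  define U where "U = (\<Inter>\<omega>\<in>UNIV. {x::real^'w. x$\<omega> > zz$\<omega>})"
  have opU: "open U" unfolding U_def by (intro open_INT ballI open_halfspace_component_gt_cart) simp
  have "w \<in> U" unfolding U_def using w(2) by simp
  then have "U \<inter> pos_facing_boundary (convex hull F) \<noteq> {}" using w(1) by blast
  then have "U \<inter> F \<noteq> {}" using dn opU unfolding dense_in_set_def by blast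
  then obtain u where uU: "u \<in> U" and uF: "u \<in> F" by blast
  obtain p where p: "p \<in> Probs" "\<forall>\<omega>. s p \<omega> = ereal (u$\<omega>)" using uF unfolding finite_scores_def by auto
  have "strictly_dominates (s p) z" unfolding strictly_dominates_def
  proof
    fix \<omega>
    have lt: "zz$\<omega> < u$\<omega>" using uU unfolding U_def by simp
    show "z \<omega> < s p \<omega>"
    proof (cases "z \<omega> = -\<infinity>")
      case True then show ?thesis using p(2) by simp
    next
      case False
      have "z \<omega> \<noteq> \<infinity>" using zM[rule_format, of \<omega>] by auto
      then have "z \<omega> = ereal (zz$\<omega>)" using False unfolding zz_def zN_def by (cases "z \<omega>") auto
      then show ?thesis using lt p(2) by simp
    qed
  qed
  then show "\<exists>p\<in>Probs. strictly_dominates (s p) z" using p(1) by blast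
qed
end


theorem theorem1:
  fixes s :: "('w::finite set \<Rightarrow> real) \<Rightarrow> 'w \<Rightarrow> ereal" and M :: real
  assumes bounded: "\<forall>p\<in>Probs. \<forall>\<omega>. s p \<omega> \<le> ereal M"
    and proper: "proper_on Probs s"
  shows "(\<forall>s' :: ('w set \<Rightarrow> real) \<Rightarrow> 'w \<Rightarrow> ereal.
            (\<forall>c \<omega>. s' c \<omega> \<le> ereal M) \<longrightarrow> (\<forall>p\<in>Probs. s' p = s p) \<longrightarrow>
            quasi_strictly_proper_on UNIV s' \<longrightarrow>
            (\<forall>c. c \<notin> Probs \<longrightarrow> (\<exists>p\<in>Probs. strictly_dominates (s' p) (s' c))))
     \<longleftrightarrow>
     ((\<exists>p\<in>Probs. \<bar>Exp p (s p)\<bar> = \<infinity>) \<or>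
      ((\<forall>(ps :: nat \<Rightarrow> 'w set \<Rightarrow> real) p.
          (\<forall>n. ps n \<in> Probs) \<longrightarrow> p \<in> Probs \<longrightarrow>
          (\<forall>\<omega>. (\<lambda>n. ps n {\<omega>}) \<longlonglongrightarrow> p {\<omega>}) \<longrightarrow>
          (\<forall>n. finite_score (s (ps n))) \<longrightarrow> \<not> finite_score (s p) \<longrightarrow>
          (\<lambda>n. Exp (ps n) (s (ps n))) \<longlonglongrightarrow> Exp p (s p)) \<and>
       dense_in_set (finite_scores s) (pos_facing_boundary (convex hull (finite_scores s)))))"
proof (cases "\<forall>p\<in>Probs. Exp p (s p) \<noteq> -\<infinity>")
  case False
  then obtain p0 where p0: "p0 \<in> Probs" "Exp p0 (s p0) = -\<infinity>" by blast
  have R: "\<exists>p\<in>Probs. \<bar>Exp p (s p)\<bar> = \<infinity>"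
    by (rule bexI[OF _ p0(1)]) (use p0(2) in simp)
  have L: "(\<forall>s' :: ('w set \<Rightarrow> real) \<Rightarrow> 'w \<Rightarrow> ereal.
             (\<forall>c \<omega>. s' c \<omega> \<le> ereal M) \<longrightarrow> (\<forall>p\<in>Probs. s' p = s p) \<longrightarrow>
             quasi_strictly_proper_on UNIV s' \<longrightarrow>
             (\<forall>c. c \<notin> Probs \<longrightarrow> (\<exists>p\<in>Probs. strictly_dominates (s' p) (s' c))))"
  proof (intro allI impI)
    fix s' :: "('w set \<Rightarrow> real) \<Rightarrow> 'w \<Rightarrow> ereal" and c :: "'w set \<Rightarrow> real"
    assume b: "\<forall>c \<omega>. s' c \<omega> \<le> ereal M" and ag: "\<forall>p\<in>Probs. s' p = s p"
      and q: "quasi_strictly_proper_on UNIV s'" and c: "c \<notin> Probs"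
    have "Exp p0 (s' c) < Exp p0 (s' p0)" using q p0(1) c unfolding quasi_strictly_proper_on_def by blast
    then show "\<exists>p\<in>Probs. strictly_dominates (s' p) (s' c)" using ag p0 by simp
  qed
  show ?thesis using L R by blast
next
  case True
  interpret srule s M using bounded proper True by unfold_locales
  have notinf: "\<not> (\<exists>p\<in>Probs. \<bar>Exp p (s p)\<bar> = \<infinity>)" using G_eq by auto
  have LA: "((\<forall>s' :: ('w set \<Rightarrow> real) \<Rightarrow> 'w \<Rightarrow> ereal.
             (\<forall>c \<omega>. s' c \<omega> \<le> ereal M) \<longrightarrow> (\<forall>p\<in>Probs. s' p = s p) \<longrightarrow>
             quasi_strictly_proper_on UNIV s' \<longrightarrow>
             (\<forall>c. c \<notin> Probs \<longrightarrow> (\<exists>p\<in>Probs. strictly_dominates (s' p) (s' c))))) \<longleftrightarrow> condA s M"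
  proof
    assume L: "(\<forall>s' :: ('w set \<Rightarrow> real) \<Rightarrow> 'w \<Rightarrow> ereal.
             (\<forall>c \<omega>. s' c \<omega> \<le> ereal M) \<longrightarrow> (\<forall>p\<in>Probs. s' p = s p) \<longrightarrow>
             quasi_strictly_proper_on UNIV s' \<longrightarrow>
             (\<forall>c. c \<notin> Probs \<longrightarrow> (\<exists>p\<in>Probs. strictly_dominates (s' p) (s' c))))"
    show "condA s M" unfolding condA_def
    proof (intro allI impI)
      fix z :: "'w \<Rightarrow> ereal"
      assume zM: "\<forall>\<omega>. z \<omega> \<le> ereal M" and zlt: "\<forall>q\<in>Probs. Exp q z < Exp q (s q)"
      define s' where "s' c = (if c \<in> Probs then s c else z)" for c
      have b: "\<forall>c \<omega>. s' c \<omega> \<le> ereal M" using bounded zM by (auto simp: s'_def)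
      have ag: "\<forall>p\<in>Probs. s' p = s p" by (simp add: s'_def)
      have q: "quasi_strictly_proper_on UNIV s'"
        unfolding quasi_strictly_proper_on_def proper_on_def
      proof (intro conjI ballI)
        fix p c :: "'w set \<Rightarrow> real" assume p: "p \<in> Probs" and "c \<in> (UNIV :: ('w set \<Rightarrow> real) set)"
        show "Exp p (s' c) \<le> Exp p (s' p)"
        proof (cases "c \<in> Probs")
          case True then show ?thesis using proper p unfolding proper_on_def s'_def by simp
        next
          case False then show ?thesis using zlt p unfolding s'_def by (simp add: less_imp_le)
        qed
      next
        fix p c :: "'w set \<Rightarrow> real" assume p: "p \<in> Probs" and c: "c \<in> (UNIV :: ('w set \<Rightarrow> real) set) - Probs"
        then show "Exp p (s' c) < Exp p (s' p)" using zlt unfolding s'_def by simp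
      qed
      define c0 :: "'w set \<Rightarrow> real" where "c0 = (\<lambda>A. 0)"
      have c0P: "c0 \<notin> Probs" unfolding c0_def by (rule zero_not_Probs)
      have "\<exists>p\<in>Probs. strictly_dominates (s' p) (s' c0)"
        using L b ag q c0P by blast
      moreover have "s' c0 = z" unfolding s'_def using c0P by simp
      ultimately show "\<exists>p\<in>Probs. strictly_dominates (s p) z" using ag by auto
    qed
  next
    assume A: "condA s M"
    show "(\<forall>s' :: ('w set \<Rightarrow> real) \<Rightarrow> 'w \<Rightarrow> ereal.
             (\<forall>c \<omega>. s' c \<omega> \<le> ereal M) \<longrightarrow> (\<forall>p\<in>Probs. s' p = s p) \<longrightarrow>
             quasi_strictly_proper_on UNIV s' \<longrightarrow>
             (\<forall>c. c \<notin> Probs \<longrightarrow> (\<exists>p\<in>Probs. strictly_dominates (s' p) (s' c))))"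
    proof (intro allI impI)
      fix s' :: "('w set \<Rightarrow> real) \<Rightarrow> 'w \<Rightarrow> ereal" and c :: "'w set \<Rightarrow> real"
      assume b: "\<forall>c \<omega>. s' c \<omega> \<le> ereal M" and ag: "\<forall>p\<in>Probs. s' p = s p"
        and q: "quasi_strictly_proper_on UNIV s'" and c: "c \<notin> Probs"
      have zlt: "\<forall>p\<in>Probs. Exp p (s' c) < Exp p (s p)"
        using q c ag unfolding quasi_strictly_proper_on_def by auto
      have zM: "\<forall>\<omega>. s' c \<omega> \<le> ereal M" using b by auto
      obtain p where "p \<in> Probs" "strictly_dominates (s p) (s' c)"
        using A zM zlt unfolding condA_def by blast
      then show "\<exists>p\<in>Probs. strictly_dominates (s' p) (s' c)" using ag by auto
    qed
  qed
  have AR: "condA s M \<longleftrightarrow> condi \<and> dense_in_set (finite_scores s) (pos_facing_boundary (convex hull (finite_scores s)))"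
  proof
    assume A: "condA s M"
    have ci: condi unfolding condi_def using A_i[OF A] by blast
    then show "condi \<and> dense_in_set (finite_scores s) (pos_facing_boundary (convex hull (finite_scores s)))"
      using A_ii[OF A] by blast
  next
    assume "condi \<and> dense_in_set (finite_scores s) (pos_facing_boundary (convex hull (finite_scores s)))"
    then show "condA s M" using i_ii_A by blast
  qed
  show ?thesis using LA AR notinf unfolding condi_def by blast
qed

end
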